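(* For all finite sets of formulas $\Gamma,\Delta$: if the sequent $\Gamma\Rightarrow\Delta$ is provable in $\mathsf{CLp}$, then $\Gamma\Vdash^{cf}\Delta$.
   Context: Fix a countably infinite set $\mathsf{At}$ of atoms. Formulas are built from atoms and the constant $\bot$ using the binary connectives $\land,\lor,\to$. All contexts are finite sets (not multisets) of formulas; a comma denotes union; a subscript $\mathsf{At}$ indicates a finite set of atoms. An atomic sequent has the form $\Gamma_{\mathsf{At}} \Rightarrow \Delta_{\mathsf{At}}$. An atomic rule has finitely many (possibly zero) atomic sequents as premises and one atomic sequent as conclusion; a rule with zero premises is an atomic axiom. A base is a (possibly empty) set of atomic rules; $\mathcal{C}\supseteq\mathcal{B}$ ($\mathcal{C}$ extends $\mathcal{B}$) if $\mathcal{C}$ contains every rule of $\mathcal{B}$. Derivability $\vdash_{\mathcal{B}}$ of atomic sequents is the least relation such that: (Axiom/Weakening) if an atomic axiom with conclusion $\Gamma_{\mathsf{At}}\Rightarrow\Delta_{\mathsf{At}}$ is in $\mathcal{B}$, then $\vdash_{\mathcal{B}} \Theta_{\mathsf{At}},\Gamma_{\mathsf{At}}\Rightarrow\Delta_{\mathsf{At}},\Sigma_{\mathsf{At}}$ for all sets of atoms $\Theta_{\mathsf{At}},\Sigma_{\mathsf{At}}$; (Mix) if a rule with premises $\Gamma^i_{\mathsf{At}}\Rightarrow\Delta^i_{\mathsf{At}}$ ($1\le i\le n$) and conclusion $\Gamma_{\mathsf{At}}\Rightarrow\Delta_{\mathsf{At}}$ is in $\mathcal{B}$ and $\vdash_{\mathcal{B}}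 \Theta^i_{\mathsf{At}},\Gamma^i_{\mathsf{At}}\Rightarrow\Delta^i_{\mathsf{At}},\Sigma^i_{\mathsf{At}}$ for each $i$, then $\vdash_{\mathcal{B}} \Theta^1_{\mathsf{At}},\dots,\Theta^n_{\mathsf{At}},\Gamma_{\mathsf{At}}\Rightarrow\Delta_{\mathsf{At}},\Sigma^1_{\mathsf{At}},\dots,\Sigma^n_{\mathsf{At}}$. Support $\Vdash_{\mathcal{B}}$: (At) $\Vdash_{\mathcal{B}}\Gamma_{\mathsf{At}}$ iff $\vdash_{\mathcal{B}}\ \Rightarrow\Gamma_{\mathsf{At}}$; ($\land$) $\Vdash_{\mathcal{B}} A\land B,\Gamma$ iff $\Vdash_{\mathcal{B}}A,\Gamma$ and $\Vdash_{\mathcal{B}}B,\Gamma$; ($\lor$) $\Vdash_{\mathcal{B}}A\lor B,\Gamma$ iff $\Vdash_{\mathcal{B}}A,B,\Gamma$; ($\to$) $\Vdash_{\mathcal{B}}A\to B,\Gamma$ iff $A\Vdash_{\mathcal{B}}B,\Gamma$; ($\bot$) $\Vdash_{\mathcal{B}}\bot,\Gamma$ iff $\Vdash_{\mathcal{B}}\Gamma$; (Inf) for $n\ge1$, $\{A^1,\dots,A^n\}\Vdash_{\mathcal{B}}\Delta$ iff for every $\mathcal{C}\supseteq\mathcal{B}$ and all sets of atoms $\Theta^1_{\mathsf{At}},\dots,\Theta^n_{\mathsf{At}}$, if $\Vdash_{\mathcal{C}}\Theta^i_{\mathsf{At}},A^i$ for all $i$ then $\Vdash_{\mathcal{C}}\Theta^1_{\mathsf{At}},\dots,\Theta^n_{\mathsf{At}},\Delta$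 (and $\varnothing\Vdash_{\mathcal{B}}\Delta$ means $\Vdash_{\mathcal{B}}\Delta$). The atomic identity rule $\mathsf{Ainit}$ is the atomic axiom $\Gamma_{\mathsf{At}},p\Rightarrow p,\Delta_{\mathsf{At}}$. $\mathcal{HS}$ is the base consisting of all instances of $\mathsf{Ainit}$ (all atoms $p$, all sets of atoms). Cut-free validity: $\Gamma\Vdash^{cf}\Delta$ iff $\Gamma\Vdash_{\mathcal{B}}\Delta$ for every base $\mathcal{B}\supseteq\mathcal{HS}$. $\mathsf{CLp}$ is the sequent calculus on sequents $\Gamma\Rightarrow\Delta$ (finite sets of formulas) with rules: $\mathsf{init}$: $\Gamma,A\Rightarrow A,\Delta$; $L\bot$: $\Gamma,\bot\Rightarrow\Delta$; $R\bot$: from $\Gamma\Rightarrow\Delta$ infer $\Gamma\Rightarrow\bot,\Delta$; $L\land$: from $A,B,\Gamma\Rightarrow\Delta$ infer $A\land B,\Gamma\Rightarrow\Delta$; $R\land$: from $\Gamma\Rightarrow\Delta,A$ and $\Gamma'\Rightarrow\Delta',B$ infer $\Gamma,\Gamma'\Rightarrow\Delta,\Delta',A\land B$; $L\lor$: from $A,\Gamma\Rightarrow\Delta$ and $B,\Gamma'\Rightarrow\Delta'$ infer $A\lor B,\Gamma,\Gamma'\Rightarrow\Delta,\Delta'$; $R\lor$: from $\Gamma\Rightarrow\Delta,A,B$ infer $\Gamma\Rightarrow\Delta,A\lor B$; $L\to$: from $\Gamma\Rightarrow\Delta,A$ and $B,\Gamma'\Rightarrow\Delta'$ infer $A\to B,\Gamma,\Gamma'\Rightarrow\Delta,\Delta'$;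 $R\to$: from $A,\Gamma\Rightarrow\Delta,B$ infer $\Gamma\Rightarrow\Delta,A\to B$. *)

theory Defs
  imports Main
begin

datatype form = Atom nat | Bot | Conj form form | Disj form form | Imp form form

fun is_atom :: "form \<Rightarrow> bool" where
  "is_atom (Atom _) = True"
| "is_atom _ = False"

type_synonym aseq = "nat set \<times> nat set"
type_synonym arule = "aseq list \<times> aseq"
type_synonym base = "arule set"

definition wf_aseq :: "aseq \<Rightarrow> bool" where
  "wf_aseq s \<longleftrightarrow> finite (fst s) \<and> finite (snd s)"

definition wf_rule :: "arule \<Rightarrow> bool" where
  "wf_rule r \<longleftrightarrow> (\<forall>s\<in>set (fst r). wf_aseq s) \<and> wf_aseq (snd r)"

definition wf_base :: "base \<Rightarrow> bool" where
  "wf_base B \<longleftrightarrow> (\<forall>r\<in>B. wf_rule r)"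

inductive deriv :: "base \<Rightarrow> nat set \<Rightarrow> nat set \<Rightarrow> bool" for B where
  axiom: "([], (G, D)) \<in> B \<Longrightarrow> finite Th \<Longrightarrow> finite Si \<Longrightarrow>
            deriv B (Th \<union> G) (D \<union> Si)"
| mix: "(ps, (G, D)) \<in> B \<Longrightarrow>
          (\<forall>i<length ps. finite (Th i) \<and> finite (Si i) \<and>
              deriv B (Th i \<union> fst (ps ! i)) (snd (ps ! i) \<union> Si i)) \<Longrightarrow>
          deriv B ((\<Union>i<length ps. Th i) \<union> G) (D \<union> (\<Union>i<length ps. Si i))"

fun wt :: "form \<Rightarrow> nat" where
  "wt (Atom _) = 0"
| "wt Bot = 1"
| "wt (Conj A B) = wt A + wt B + 1"
| "wt (Disj A B) = wt A + wt B + 1"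
| "wt (Imp A B) = wt A + wt B + 1"

lemma some_na: "\<not>(\<forall>A\<in>G. is_atom A) \<Longrightarrow> (SOME A. A\<in>G \<and> \<not>is_atom A) \<in> G \<and> \<not> is_atom (SOME A. A\<in>G \<and> \<not>is_atom A)"
  by (metis (mono_tags, lifting) someI_ex)
lemma sum_rem: "finite G \<Longrightarrow> A \<in> G \<Longrightarrow> sum wt G = wt A + sum wt (G - {A})"
  by (simp add: sum.remove)
lemma sum_ins: "sum wt (insert X S) \<le> wt X + sum wt S"
  by (cases "finite S") (auto simp: sum.insert_if)
lemma sum_atoms: "sum wt (Atom ` T \<union> S) \<le> sum wt S"
proof (cases "finite (Atom ` T \<union> S)")
  case True
  then have "sum wt (Atom ` T \<union> S) \<le> sum wt (Atom ` T) + sum wt S" by (simp add: sum_Un_nat)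
  moreover have "sum wt (Atom ` T) = 0" by (simp add: sum.neutral)
  ultimately show ?thesis by simp
qed simp
lemma L: "finite G \<Longrightarrow> \<exists>x\<in>G. \<not>is_atom x \<Longrightarrow> K = (SOME A. A\<in>G \<and> \<not>is_atom A) \<Longrightarrow> sum wt G = wt K + sum wt (G - {K})"
  using some_na[of G] sum_rem by auto
text \<open>If \<Gamma> contains a non-atomic formula, one such formula
  is (arbitrarily) chosen and decomposed by the corresponding clause.\<close>

function supp :: "base \<Rightarrow> form set \<Rightarrow> bool" where
  "supp B \<Gamma> =
    (if \<not> finite \<Gamma> then False
     else if (\<forall>A\<in>\<Gamma>. is_atom A) then deriv B {} {p. Atom p \<in> \<Gamma>}
     else (let A = (SOME A. A \<in> \<Gamma> \<and> \<not> is_atom A); \<Gamma>' = \<Gamma> - {A} in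
       (case A of
          Atom _ \<Rightarrow> False
        | Bot \<Rightarrow> supp B \<Gamma>'
        | Conj X Y \<Rightarrow> supp B (insert X \<Gamma>') \<and> supp B (insert Y \<Gamma>')
        | Disj X Y \<Rightarrow> supp B (insert X (insert Y \<Gamma>'))
        | Imp X Y \<Rightarrow> (\<forall>C. wf_base C \<and> B \<subseteq> C \<longrightarrow>
              (\<forall>Th. finite Th \<longrightarrow> supp C (insert X (Atom ` Th)) \<longrightarrow>
                    supp C (insert Y (Atom ` Th \<union> \<Gamma>')))))))"
  by pat_completeness auto
termination
  apply (relation "measure (\<lambda>(B, \<Gamma>). sum wt \<Gamma>)")
  apply simp
  apply (simp_all add: Let_def)
  subgoal by (drule (2) L) simp
  subgoal for G x xa X Y
    using L[of G "Conj X Y"] sum_ins[of X "G - {Conj X Y}"] by (drule_tac sym) simp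
  subgoal for G x xa X Y
    using L[of G "Conj X Y"] sum_ins[of Y "G - {Conj X Y}"] by (drule_tac sym) simp
  subgoal for G x xa X Y
    using L[of G "Disj X Y"] sum_ins[of X "insert Y (G - {Disj X Y})"] sum_ins[of Y "G - {Disj X Y}"] by (drule_tac sym) simp
  subgoal for B G x xa X Y C T
    using L[of G "Imp X Y"] sum_ins[of X "Atom ` T"] sum.neutral[of "Atom ` T" wt] by (drule_tac sym) simp
  subgoal for B G x xa X Y C T
    using L[of G "Imp X Y"] sum_ins[of Y "Atom ` T \<union> (G - {Imp X Y})"] sum_atoms[of T "G - {Imp X Y}"] by (drule_tac sym) simp
  done

text \<open>Since the
  context is a set of distinct formulas, the atom sets \<open>\<Theta>\<^sup>i\<close> are indexed by the
  formulas of the context.\<close>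

definition supp_ctx :: "base \<Rightarrow> form set \<Rightarrow> form set \<Rightarrow> bool" where
  "supp_ctx B \<Gamma> \<Delta> \<longleftrightarrow>
     (if \<Gamma> = {} then supp B \<Delta>
      else (\<forall>C. wf_base C \<and> B \<subseteq> C \<longrightarrow>
             (\<forall>Th :: form \<Rightarrow> nat set.
                (\<forall>A\<in>\<Gamma>. finite (Th A) \<and> supp C (insert A (Atom ` Th A))) \<longrightarrow>
                supp C (Atom ` (\<Union>A\<in>\<Gamma>. Th A) \<union> \<Delta>))))"

definition HS :: base where
  "HS = {([], (insert p G, insert p D)) | p G D. finite G \<and> finite D}"

definition cf_valid :: "form set \<Rightarrow> form set \<Rightarrow> bool" where
  "cf_valid \<Gamma> \<Delta> \<longleftrightarrow> (\<forall>B. wf_base B \<and> HS \<subseteq> B \<longrightarrow> supp_ctx B \<Gamma> \<Delta>)"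

inductive CLp :: "form set \<Rightarrow> form set \<Rightarrow> bool" where
  init: "finite G \<Longrightarrow> finite D \<Longrightarrow> CLp (insert A G) (insert A D)"
| LBot: "finite G \<Longrightarrow> finite D \<Longrightarrow> CLp (insert Bot G) D"
| RBot: "CLp G D \<Longrightarrow> CLp G (insert Bot D)"
| LConj: "CLp (insert A (insert B G)) D \<Longrightarrow> CLp (insert (Conj A B) G) D"
| RConj: "CLp G (insert A D) \<Longrightarrow> CLp G' (insert B D') \<Longrightarrow>
            CLp (G \<union> G') (insert (Conj A B) (D \<union> D'))"
| LDisj: "CLp (insert A G) D \<Longrightarrow> CLp (insert B G') D' \<Longrightarrow>
            CLp (insert (Disj A B) (G \<union> G')) (D \<union> D')"
| RDisj: "CLp G (insert A (insert B D)) \<Longrightarrow> CLp G (insert (Disj A B) D)"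
| LImp: "CLp G (insert A D) \<Longrightarrow> CLp (insert B G') D' \<Longrightarrow>
            CLp (insert (Imp A B) (G \<union> G')) (D \<union> D')"
| RImp: "CLp (insert A G) (insert B D) \<Longrightarrow> CLp G (insert (Imp A B) D)"

end

theory Submission
  imports Defs "HOL-Library.Multiset"
begin

lemma deriv_mono: "deriv B G D \<Longrightarrow> B \<subseteq> C \<Longrightarrow> deriv C G D"
proof (induction rule: deriv.induct)
  case (axiom G D Th Si) then show ?case by (auto intro: deriv.axiom)
next
  case (mix ps G D Th Si) then show ?case by (auto intro!: deriv.mix)
qed

lemma deriv_weakR: "deriv B G D \<Longrightarrow> finite S \<Longrightarrow> deriv B G (D \<union> S)"
proof (induction rule: deriv.induct)
  case (axiom G D Th Si)
  have "deriv B (Th \<union> G) (D \<union> (Si \<union> S))" using axiom by (intro deriv.axiom) auto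
  then show ?case by (simp add: Un_assoc)
next
  case (mix ps G D Th Si)
  show ?case
  proof (cases ps)
    case Nil
    have "deriv B ({} \<union> G) (D \<union> S)" using mix Nil by (intro deriv.axiom) auto
    then show ?thesis using Nil by simp
  next
    case (Cons p ps')
    define Si' where "Si' = Si(0 := Si 0 \<union> S)"
    have "deriv B ((\<Union>i<length ps. Th i) \<union> G) (D \<union> (\<Union>i<length ps. Si' i))"
    proof (rule deriv.mix[OF mix(1)], intro allI impI)
      fix i assume i: "i < length ps"
      show "finite (Th i) \<and> finite (Si' i) \<and> deriv B (Th i \<union> fst (ps ! i)) (snd (ps ! i) \<union> Si' i)"
        using mix(2) i mix(3) by (cases "i = 0") (auto simp: Si'_def Un_assoc)
    qed
    moreover have "(\<Union>i<length ps. Si' i) = (\<Union>i<length ps. Si i) \<union> S"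
    proof
      show "(\<Union>i<length ps. Si' i) \<subseteq> (\<Union>i<length ps. Si i) \<union> S"
        unfolding Si'_def by (auto split: if_splits)
      have "0 < length ps" using Cons by simp
      moreover have "\<And>i. Si i \<subseteq> Si' i" "S \<subseteq> Si' 0" unfolding Si'_def by auto
      ultimately show "(\<Union>i<length ps. Si i) \<union> S \<subseteq> (\<Union>i<length ps. Si' i)"
        by blast
    qed
    ultimately show ?thesis by (simp add: Un_assoc)
  qed
qed

fun sz :: "form \<Rightarrow> nat" where
  "sz (Atom _) = 1"
| "sz Bot = 1"
| "sz (Conj X Y) = sz X + sz Y + 1"
| "sz (Disj X Y) = sz X + sz Y + 1"
| "sz (Imp X Y) = sz X + sz Y + 1"

definition msz :: "form list \<Rightarrow> nat" where "msz xs = sum_list (map sz xs)"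

lemma sz_pos: "sz F > 0" by (cases F) auto

function supp_l :: "base \<Rightarrow> nat set \<Rightarrow> form list \<Rightarrow> bool" where
  "supp_l B At [] = deriv B {} At"
| "supp_l B At (Atom p # xs) = supp_l B (insert p At) xs"
| "supp_l B At (Bot # xs) = supp_l B At xs"
| "supp_l B At (Conj X Y # xs) = (supp_l B At (X # xs) \<and> supp_l B At (Y # xs))"
| "supp_l B At (Disj X Y # xs) = supp_l B At (X # Y # xs)"
| "supp_l B At (Imp X Y # xs) = (\<forall>C. wf_base C \<and> B \<subseteq> C \<longrightarrow>
      (\<forall>Th. finite Th \<longrightarrow> supp_l C Th [X] \<longrightarrow> supp_l C (At \<union> Th) (Y # xs)))"
  by pat_completeness auto
termination
  by (relation "measure (\<lambda>(B, At, xs). msz xs)") (auto simp: msz_def)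

fun stepF :: "form \<Rightarrow> (base \<Rightarrow> nat set \<Rightarrow> form list \<Rightarrow> bool) \<Rightarrow> base \<Rightarrow> nat set \<Rightarrow> bool" where
  "stepF (Atom p) P B At = P B (insert p At) []"
| "stepF Bot P B At = P B At []"
| "stepF (Conj X Y) P B At = (P B At [X] \<and> P B At [Y])"
| "stepF (Disj X Y) P B At = P B At [X, Y]"
| "stepF (Imp X Y) P B At = (\<forall>C. wf_base C \<and> B \<subseteq> C \<longrightarrow>
      (\<forall>Th. finite Th \<longrightarrow> supp_l C Th [X] \<longrightarrow> P C (At \<union> Th) [Y]))"

fun comps :: "form \<Rightarrow> form list set" where
  "comps (Atom p) = {[]}"
| "comps Bot = {[]}"
| "comps (Conj X Y) = {[X], [Y]}"
| "comps (Disj X Y) = {[X, Y]}"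
| "comps (Imp X Y) = {[Y]}"

lemma unfold_l: "supp_l B At (F # xs) = stepF F (\<lambda>B' At' zs. supp_l B' At' (zs @ xs)) B At"
  by (cases F) auto

lemma comps_lt: "zs \<in> comps F \<Longrightarrow> msz zs < sz F"
  by (cases F) (auto simp: msz_def)

lemma stepF_cong: "(\<And>B' At' zs. zs \<in> comps F \<Longrightarrow> P B' At' zs = P' B' At' zs) \<Longrightarrow> stepF F P B At = stepF F P' B At"
  by (cases F) auto

lemma supp_l_mono: "supp_l B At xs \<Longrightarrow> B \<subseteq> C \<Longrightarrow> supp_l C At xs"
proof (induction B At xs arbitrary: C rule: supp_l.induct)
  case (1 B At) then show ?case by (auto intro: deriv_mono)
next
  case (6 B At X Y xs) then show ?case by (meson order_trans supp_l.simps(6))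
qed auto

lemma supp_l_weakAt: "supp_l B At xs \<Longrightarrow> finite At' \<Longrightarrow> supp_l B (At \<union> At') xs"
proof (induction B At xs rule: supp_l.induct)
  case (1 B At) then show ?case by (auto intro: deriv_weakR)
next
  case (6 B At X Y xs)
  show ?case unfolding supp_l.simps
  proof (intro allI impI)
    fix C Th assume "wf_base C \<and> B \<subseteq> C" "finite Th" "supp_l C Th [X]"
    then have "supp_l C (At \<union> Th \<union> At') (Y # xs)" using 6 by auto
    then show "supp_l C (At \<union> At' \<union> Th) (Y # xs)" by (simp add: Un_ac)
  qed
qed auto

lemma supp_l_weakF: "supp_l B At xs \<Longrightarrow> supp_l B At (G # xs)"
proof (induction G arbitrary: B At xs)
  case (Atom p) then show ?case using supp_l_weakAt[of B At xs "{p}"] by simp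
next
  case Bot then show ?case by simp
next
  case (Conj X Y) then show ?case by simp
next
  case (Disj X Y)
  have "supp_l B At (Y # xs)" using Disj.IH(2) Disj.prems by blast
  then have "supp_l B At (X # Y # xs)" using Disj.IH(1) by blast
  then show ?case by simp
next
  case (Imp X Y)
  show ?case unfolding supp_l.simps
  proof (intro allI impI)
    fix C Th assume C: "wf_base C \<and> B \<subseteq> C" and T: "finite Th" and "supp_l C Th [X]"
    have "supp_l C At xs" using Imp.prems supp_l_mono C by blast
    then have "supp_l C (At \<union> Th) xs" using supp_l_weakAt T by blast
    then show "supp_l C (At \<union> Th) (Y # xs)" using Imp.IH(2) by blast
  qed
qed

lemma msz_mset: "mset xs = mset ys \<Longrightarrow> msz xs = msz ys"
  unfolding msz_def by (metis mset_map sum_mset_sum_list)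

lemma msz_app[simp]: "msz (xs @ ys) = msz xs + msz ys" by (simp add: msz_def)
lemma msz_Cons[simp]: "msz (x # ys) = sz x + msz ys" by (simp add: msz_def)

lemma stepF_comm_II:
  "stepF (Imp X1 Y1) (\<lambda>B1 A1 z1. stepF (Imp X2 Y2) (\<lambda>B2 A2 z2. Q B2 A2 z1 z2) B1 A1) B At =
   stepF (Imp X2 Y2) (\<lambda>B1 A1 z2. stepF (Imp X1 Y1) (\<lambda>B2 A2 z1. Q B2 A2 z1 z2) B1 A1) B At"
  unfolding stepF.simps
proof (intro iffI allI impI)
  fix C Th C' Th'
  assume H: "\<forall>C. wf_base C \<and> B \<subseteq> C \<longrightarrow> (\<forall>Th. finite Th \<longrightarrow> supp_l C Th [X1] \<longrightarrow>
    (\<forall>C'. wf_base C' \<and> C \<subseteq> C' \<longrightarrow> (\<forall>Th'. finite Th' \<longrightarrow> supp_l C' Th' [X2] \<longrightarrow> Q C' (At \<union> Th \<union> Th') [Y1] [Y2])))"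
    and a: "wf_base C \<and> B \<subseteq> C" "finite Th" "supp_l C Th [X2]" "wf_base C' \<and> C \<subseteq> C'" "finite Th'" "supp_l C' Th' [X1]"
  have "Q C' (At \<union> Th' \<union> Th) [Y1] [Y2]"
    using H[rule_format, of C' Th' C' Th] a supp_l_mono[OF a(3)] by auto
  then show "Q C' (At \<union> Th \<union> Th') [Y1] [Y2]" by (simp add: Un_ac)
next
  fix C Th C' Th'
  assume H: "\<forall>C. wf_base C \<and> B \<subseteq> C \<longrightarrow> (\<forall>Th. finite Th \<longrightarrow> supp_l C Th [X2] \<longrightarrow>
    (\<forall>C'. wf_base C' \<and> C \<subseteq> C' \<longrightarrow> (\<forall>Th'. finite Th' \<longrightarrow> supp_l C' Th' [X1] \<longrightarrow> Q C' (At \<union> Th \<union> Th') [Y1] [Y2])))"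
    and a: "wf_base C \<and> B \<subseteq> C" "finite Th" "supp_l C Th [X1]" "wf_base C' \<and> C \<subseteq> C'" "finite Th'" "supp_l C' Th' [X2]"
  have "Q C' (At \<union> Th' \<union> Th) [Y1] [Y2]"
    using H[rule_format, of C' Th' C' Th] a supp_l_mono[OF a(3)] by auto
  then show "Q C' (At \<union> Th \<union> Th') [Y1] [Y2]" by (simp add: Un_ac)
qed

lemma stepF_comm:
  "stepF F (\<lambda>B1 A1 z1. stepF G (\<lambda>B2 A2 z2. Q B2 A2 z1 z2) B1 A1) B At =
   stepF G (\<lambda>B1 A1 z2. stepF F (\<lambda>B2 A2 z1. Q B2 A2 z1 z2) B1 A1) B At"
proof (cases "\<exists>X1 Y1 X2 Y2. F = Imp X1 Y1 \<and> G = Imp X2 Y2")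
  case True
  then obtain X1 Y1 X2 Y2 where "F = Imp X1 Y1" "G = Imp X2 Y2" by blast
  then show ?thesis using stepF_comm_II by metis
next
  case False
  then show ?thesis by (cases F; cases G) (auto simp: insert_commute)
qed

lemma perm_l: "mset xs = mset ys \<Longrightarrow> supp_l B At xs = supp_l B At ys"
proof (induction "msz xs" arbitrary: B At xs ys rule: less_induct)
  case less
  have IH: "\<And>B' At' u v. msz u < msz xs \<Longrightarrow> mset u = mset v \<Longrightarrow> supp_l B' At' u = supp_l B' At' v"
    using less.hyps by blast
  show ?case
  proof (cases xs)
    case Nil then show ?thesis using less.prems by simp
  next
    case (Cons F xs')
    have "F \<in> set ys" using less.prems Cons by (metis list.set_intros(1) set_mset_mset)
    then obtain ys1 ys2 where ys: "ys = ys1 @ F # ys2" by (meson split_list)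
    have n: "msz xs = msz ys" by (rule msz_mset[OF less.prems])
    show ?thesis
    proof (cases ys1)
      case Nil
      have m: "mset xs' = mset ys2" using less.prems Cons ys Nil by simp
      show ?thesis unfolding Cons ys Nil append_Nil unfold_l
      proof (rule stepF_cong)
        fix B' At' zs assume "zs \<in> comps F"
        then have "msz (zs @ xs') < msz xs" using comps_lt Cons by fastforce
        moreover have "mset (zs @ xs') = mset (zs @ ys2)" using m by simp
        ultimately show "supp_l B' At' (zs @ xs') = supp_l B' At' (zs @ ys2)"
          by (rule IH)
      qed
    next
      case (Cons G ys1')
      define rest where "rest = ys1' @ ys2"
      have m1: "mset xs' = mset (G # rest)" using less.prems \<open>xs = F # xs'\<close> ys Cons
        by (simp add: rest_def)
      have nx: "msz xs = sz F + sz G + msz rest"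
        using msz_mset[OF m1] \<open>xs = F # xs'\<close> by simp
      have L: "supp_l B At xs = stepF F (\<lambda>B1 A1 z1. stepF G (\<lambda>B2 A2 z2. supp_l B2 A2 (z1 @ z2 @ rest)) B1 A1) B At"
        unfolding \<open>xs = F # xs'\<close> unfold_l
      proof (rule stepF_cong)
        fix B' At' zs assume zs: "zs \<in> comps F"
        have "msz (zs @ xs') < msz xs" using comps_lt[OF zs] \<open>xs = F # xs'\<close> by simp
        moreover have "mset (zs @ xs') = mset (G # zs @ rest)" using m1 by simp
        ultimately have "supp_l B' At' (zs @ xs') = supp_l B' At' (G # zs @ rest)"
          by (rule IH)
        also have "\<dots> = stepF G (\<lambda>B2 A2 z2. supp_l B2 A2 (z2 @ zs @ rest)) B' At'"
          by (rule unfold_l)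
        also have "\<dots> = stepF G (\<lambda>B2 A2 z2. supp_l B2 A2 (zs @ z2 @ rest)) B' At'"
        proof (rule stepF_cong)
          fix B'' At'' z2 assume z2: "z2 \<in> comps G"
          have "msz (z2 @ zs @ rest) < msz xs" using comps_lt[OF z2] comps_lt[OF zs] nx by simp
          moreover have "mset (z2 @ zs @ rest) = mset (zs @ z2 @ rest)" by simp
          ultimately show "supp_l B'' At'' (z2 @ zs @ rest) = supp_l B'' At'' (zs @ z2 @ rest)"
            by (rule IH)
        qed
        finally show "supp_l B' At' (zs @ xs') = stepF G (\<lambda>B2 A2 z2. supp_l B2 A2 (zs @ z2 @ rest)) B' At'" .
      qed
      have R: "supp_l B At ys = stepF G (\<lambda>B1 A1 z2. stepF F (\<lambda>B2 A2 z1. supp_l B2 A2 (z1 @ z2 @ rest)) B1 A1) B At"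
        unfolding ys Cons append_Cons unfold_l
      proof (rule stepF_cong)
        fix B' At' zs assume zs: "zs \<in> comps G"
        have "msz (zs @ ys1' @ F # ys2) < msz xs" using comps_lt[OF zs] n ys Cons by simp
        moreover have "mset (zs @ ys1' @ F # ys2) = mset (F # zs @ rest)" by (simp add: rest_def)
        ultimately have "supp_l B' At' (zs @ ys1' @ F # ys2) = supp_l B' At' (F # zs @ rest)"
          by (rule IH)
        also have "\<dots> = stepF F (\<lambda>B2 A2 z1. supp_l B2 A2 (z1 @ zs @ rest)) B' At'"
          by (rule unfold_l)
        finally show "supp_l B' At' (zs @ ys1' @ F # ys2) = stepF F (\<lambda>B2 A2 z1. supp_l B2 A2 (z1 @ zs @ rest)) B' At'" .
      qed
      have C: "stepF F (\<lambda>B1 A1 z1. stepF G (\<lambda>B2 A2 z2. supp_l B2 A2 (z1 @ z2 @ rest)) B1 A1) B At =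
               stepF G (\<lambda>B1 A1 z2. stepF F (\<lambda>B2 A2 z1. supp_l B2 A2 (z1 @ z2 @ rest)) B1 A1) B At"
        by (rule stepF_comm)
      show ?thesis by (rule trans[OF L trans[OF C R[symmetric]]])
    qed
  qed
qed

lemma swap_l: "supp_l B At (a # b # xs) = supp_l B At (b # a # xs)"
  by (rule perm_l) simp

lemma contr_l: "supp_l B At (F # F # xs) = supp_l B At (F # xs)"
proof (induction F arbitrary: B At xs)
  case (Conj X Y)
  have e1: "supp_l B At (X # Conj X Y # xs) = (supp_l B At (X # xs) \<and> supp_l B At (Y # X # xs))"
    using swap_l[of B At X "Conj X Y" xs] Conj.IH(1) by simp
  have e2: "supp_l B At (Y # Conj X Y # xs) = (supp_l B At (X # Y # xs) \<and> supp_l B At (Y # xs))"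
    using swap_l[of B At Y "Conj X Y" xs] Conj.IH(2) by simp
  have w1: "supp_l B At (X # xs) \<Longrightarrow> supp_l B At (Y # X # xs)" by (rule supp_l_weakF)
  have w2: "supp_l B At (Y # xs) \<Longrightarrow> supp_l B At (X # Y # xs)" by (rule supp_l_weakF)
  have "supp_l B At (Conj X Y # Conj X Y # xs) = (supp_l B At (X # Conj X Y # xs) \<and> supp_l B At (Y # Conj X Y # xs))"
    by simp
  also have "\<dots> = (supp_l B At (X # xs) \<and> supp_l B At (Y # xs))" unfolding e1 e2 using w1 w2 by blast
  finally show ?case by simp
next
  case (Disj X Y)
  have "supp_l B At (Disj X Y # Disj X Y # xs) = supp_l B At (X # Y # Disj X Y # xs)" by simp
  also have "\<dots> = supp_l B At (Disj X Y # X # Y # xs)" by (rule perm_l) simp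
  also have "\<dots> = supp_l B At (X # Y # X # Y # xs)" by simp
  also have "\<dots> = supp_l B At (X # X # Y # Y # xs)" by (rule perm_l) simp
  also have "\<dots> = supp_l B At (X # Y # Y # xs)" by (rule Disj.IH(1))
  also have "\<dots> = supp_l B At (Y # Y # X # xs)" by (rule perm_l) simp
  also have "\<dots> = supp_l B At (Y # X # xs)" using Disj.IH(2) by simp
  also have "\<dots> = supp_l B At (Disj X Y # xs)" using swap_l by simp
  finally show ?case .
next
  case (Imp X Y)
  have e: "\<And>C Th. supp_l C Th (Y # Imp X Y # xs) = supp_l C Th (Imp X Y # Y # xs)" using swap_l by blast
  show ?case unfolding supp_l.simps(6) e
  proof (intro iffI allI impI)
    fix C Th assume H: "\<forall>C. wf_base C \<and> B \<subseteq> C \<longrightarrow> (\<forall>Th. finite Th \<longrightarrow> supp_l C Th [X] \<longrightarrow>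
       (\<forall>C'. wf_base C' \<and> C \<subseteq> C' \<longrightarrow> (\<forall>Th'. finite Th' \<longrightarrow> supp_l C' Th' [X] \<longrightarrow> supp_l C' (At \<union> Th \<union> Th') (Y # Y # xs))))"
      and a: "wf_base C \<and> B \<subseteq> C" "finite Th" "supp_l C Th [X]"
    then have "supp_l C (At \<union> Th \<union> Th) (Y # Y # xs)" by blast
    then show "supp_l C (At \<union> Th) (Y # xs)" using Imp.IH(2) by simp
  next
    fix C Th C' Th'
    assume H: "\<forall>C. wf_base C \<and> B \<subseteq> C \<longrightarrow> (\<forall>Th. finite Th \<longrightarrow> supp_l C Th [X] \<longrightarrow> supp_l C (At \<union> Th) (Y # xs))"
      and a: "wf_base C \<and> B \<subseteq> C" "finite Th" "supp_l C Th [X]" "wf_base C' \<and> C \<subseteq> C'" "finite Th'" "supp_l C' Th' [X]"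
    then have "supp_l C' (At \<union> Th') (Y # xs)" by (meson order_trans)
    then have "supp_l C' (At \<union> Th' \<union> Th) (Y # xs)" using supp_l_weakAt a(2) by blast
    then show "supp_l C' (At \<union> Th \<union> Th') (Y # Y # xs)" using Imp.IH(2) by (simp add: Un_ac)
  qed
qed auto

lemma contr_mem: "F \<in> set xs \<Longrightarrow> supp_l B At (F # xs) = supp_l B At xs"
proof -
  assume "F \<in> set xs"
  then obtain xs1 xs2 where xs: "xs = xs1 @ F # xs2" by (meson split_list)
  have "supp_l B At (F # xs) = supp_l B At (F # F # xs1 @ xs2)" unfolding xs by (rule perm_l) simp
  also have "\<dots> = supp_l B At (F # xs1 @ xs2)" by (rule contr_l)
  also have "\<dots> = supp_l B At xs" unfolding xs by (rule perm_l) simp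
  finally show ?thesis .
qed

lemma remdups_l: "supp_l B At (zs @ xs) = supp_l B At (zs @ remdups xs)"
proof (induction xs arbitrary: zs)
  case (Cons F xs)
  show ?case
  proof (cases "F \<in> set xs")
    case True
    have "supp_l B At (zs @ F # xs) = supp_l B At (F # zs @ xs)" by (rule perm_l) simp
    also have "\<dots> = supp_l B At (zs @ xs)" using True by (intro contr_mem) simp
    also have "\<dots> = supp_l B At (zs @ remdups xs)" by (rule Cons)
    finally show ?thesis using True by simp
  next
    case False
    have "supp_l B At (zs @ F # xs) = supp_l B At ((zs @ [F]) @ xs)" by simp
    also have "\<dots> = supp_l B At ((zs @ [F]) @ remdups xs)" by (rule Cons)
    finally show ?thesis using False by simp
  qed
qed simp

lemma set_l: "set xs = set ys \<Longrightarrow> supp_l B At xs = supp_l B At ys"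
proof -
  assume s: "set xs = set ys"
  have "mset (remdups xs) = mset (remdups ys)"
    using s by (simp add: set_eq_iff_mset_eq_distinct[symmetric])
  then have "supp_l B At (remdups xs) = supp_l B At (remdups ys)" by (rule perm_l)
  then show ?thesis using remdups_l[of B At "[]" xs] remdups_l[of B At "[]" ys] by simp
qed

declare supp.simps[simp del]

lemma atoms_l: "supp_l B At (map Atom ps @ xs) = supp_l B (At \<union> set ps) xs"
  by (induction ps arbitrary: At) auto

lemma allatoms_l: "\<forall>F\<in>set xs. is_atom F \<Longrightarrow> supp_l B At xs = deriv B {} (At \<union> {p. Atom p \<in> set xs})"
proof (induction xs arbitrary: At)
  case Nil then show ?case by simp
next
  case (Cons F xs)
  then obtain p where F: "F = Atom p" by (cases F) auto
  have "At \<union> {q. Atom q \<in> set (F # xs)} = insert p At \<union> {q. Atom q \<in> set xs}" using F by auto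
  then show ?case using Cons F by simp
qed

lemma supp_eq: "finite \<Gamma> \<Longrightarrow> set xs = \<Gamma> \<Longrightarrow> supp B \<Gamma> = supp_l B {} xs"
proof (induction B \<Gamma> arbitrary: xs rule: supp.induct)
  case (1 B \<Gamma>)
  have S0: "supp B \<Gamma> =
    (if \<not> finite \<Gamma> then False
     else if (\<forall>A\<in>\<Gamma>. is_atom A) then deriv B {} {p. Atom p \<in> \<Gamma>}
     else (let A = (SOME A. A \<in> \<Gamma> \<and> \<not> is_atom A); \<Gamma>' = \<Gamma> - {A} in
       (case A of
          Atom _ \<Rightarrow> False
        | Bot \<Rightarrow> supp B \<Gamma>'
        | Conj X Y \<Rightarrow> supp B (insert X \<Gamma>') \<and> supp B (insert Y \<Gamma>')
        | Disj X Y \<Rightarrow> supp B (insert X (insert Y \<Gamma>'))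
        | Imp X Y \<Rightarrow> (\<forall>C. wf_base C \<and> B \<subseteq> C \<longrightarrow>
              (\<forall>Th. finite Th \<longrightarrow> supp C (insert X (Atom ` Th)) \<longrightarrow>
                    supp C (insert Y (Atom ` Th \<union> \<Gamma>')))))))"
    by (rule supp.simps)
  show ?case
  proof (cases "\<forall>A\<in>\<Gamma>. is_atom A")
    case True
    have "supp B \<Gamma> = deriv B {} {p. Atom p \<in> \<Gamma>}" using True 1(7) S0 by simp
    then show ?thesis using allatoms_l[of xs B "{}"] True 1(8) by simp
  next
    case False
    define K where "K = (SOME A. A \<in> \<Gamma> \<and> \<not> is_atom A)"
    define \<Gamma>' where "\<Gamma>' = \<Gamma> - {K}"
    have K: "K \<in> \<Gamma>" "\<not> is_atom K" using some_na[OF False] K_def by auto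
    have fin: "finite \<Gamma>'" using 1(7) \<Gamma>'_def by simp
    obtain xs' where xs': "set xs' = \<Gamma>'" using finite_list[OF fin] by blast
    have L: "supp_l B {} xs = supp_l B {} (K # xs')" using K xs' 1(8) \<Gamma>'_def by (intro set_l) auto
    have S: "supp B \<Gamma> = (case K of
          Atom _ \<Rightarrow> False
        | Bot \<Rightarrow> supp B \<Gamma>'
        | Conj X Y \<Rightarrow> supp B (insert X \<Gamma>') \<and> supp B (insert Y \<Gamma>')
        | Disj X Y \<Rightarrow> supp B (insert X (insert Y \<Gamma>'))
        | Imp X Y \<Rightarrow> (\<forall>C. wf_base C \<and> B \<subseteq> C \<longrightarrow>
              (\<forall>Th. finite Th \<longrightarrow> supp C (insert X (Atom ` Th)) \<longrightarrow>
                    supp C (insert Y (Atom ` Th \<union> \<Gamma>')))))"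
      using S0 False 1(7) unfolding Let_def K_def[symmetric] \<Gamma>'_def[symmetric] by simp
    have nf: "\<not> infinite \<Gamma>" using 1(7) by simp
    note IH1 = 1(1)[OF nf False K_def \<Gamma>'_def]
    note IH2 = 1(2)[OF nf False K_def \<Gamma>'_def]
    note IH3 = 1(3)[OF nf False K_def \<Gamma>'_def]
    note IH4 = 1(4)[OF nf False K_def \<Gamma>'_def]
    note IH5 = 1(5)[OF nf False K_def \<Gamma>'_def]
    note IH6 = 1(6)[OF nf False K_def \<Gamma>'_def]
    show ?thesis
    proof (cases K)
      case (Atom p) then show ?thesis using K by simp
    next
      case Bot
      have "supp B \<Gamma>' = supp_l B {} xs'" by (rule IH1[OF Bot fin xs'])
      then show ?thesis using S L Bot by simp
    next
      case (Conj X Y)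
      have "supp B (insert X \<Gamma>') = supp_l B {} (X # xs')" by (rule IH2[OF Conj]) (use fin xs' in auto)
      moreover have "supp B (insert Y \<Gamma>') = supp_l B {} (Y # xs')" by (rule IH3[OF Conj]) (use fin xs' in auto)
      ultimately show ?thesis using S L Conj by simp
    next
      case (Disj X Y)
      have "supp B (insert X (insert Y \<Gamma>')) = supp_l B {} (X # Y # xs')" by (rule IH4[OF Disj]) (use fin xs' in auto)
      then show ?thesis using S L Disj by simp
    next
      case (Imp X Y)
      have E: "(supp C (insert X (Atom ` Th)) \<longrightarrow> supp C (insert Y (Atom ` Th \<union> \<Gamma>'))) =
          (supp_l C Th [X] \<longrightarrow> supp_l C Th (Y # xs'))" if C: "wf_base C \<and> B \<subseteq> C" and T: "finite Th" for C Th
      proof -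
        obtain ps where ps: "set ps = Th" using finite_list[OF T] by blast
        have e1: "supp C (insert X (Atom ` Th)) = supp_l C Th [X]"
        proof -
          have "supp C (insert X (Atom ` Th)) = supp_l C {} (X # map Atom ps)"
            by (rule IH5[OF Imp C T]) (use T ps in auto)
          also have "\<dots> = supp_l C {} (map Atom ps @ [X])" by (rule set_l) auto
          also have "\<dots> = supp_l C Th [X]" using atoms_l[of C "{}" ps "[X]"] ps by simp
          finally show ?thesis .
        qed
        have e2: "supp C (insert Y (Atom ` Th \<union> \<Gamma>')) = supp_l C Th (Y # xs')"
          if a: "supp C (insert X (Atom ` Th))"
        proof -
          have "supp C (insert Y (Atom ` Th \<union> \<Gamma>')) = supp_l C {} (Y # map Atom ps @ xs')"
            by (rule IH6[OF Imp C T a]) (use T ps fin xs' in auto)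
          also have "\<dots> = supp_l C {} (map Atom ps @ Y # xs')" by (rule set_l) auto
          also have "\<dots> = supp_l C Th (Y # xs')" using atoms_l[of C "{}" ps "Y # xs'"] ps by simp
          finally show ?thesis .
        qed
        show ?thesis using e1 e2 by blast
      qed
      have "supp B \<Gamma> = (\<forall>C. wf_base C \<and> B \<subseteq> C \<longrightarrow>
              (\<forall>Th. finite Th \<longrightarrow> supp C (insert X (Atom ` Th)) \<longrightarrow>
                    supp C (insert Y (Atom ` Th \<union> \<Gamma>'))))" using S Imp by simp
      also have "\<dots> = (\<forall>C. wf_base C \<and> B \<subseteq> C \<longrightarrow>
              (\<forall>Th. finite Th \<longrightarrow> supp_l C Th [X] \<longrightarrow> supp_l C Th (Y # xs')))"
        using E by blast
      also have "\<dots> = supp_l B {} xs" using L Imp by simp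
      finally show ?thesis .
    qed
  qed
qed

lemma supp_fin: "supp B \<Gamma> \<Longrightarrow> finite \<Gamma>"
  by (subst (asm) supp.simps) (auto split: if_splits)

lemma supp_lset: "finite At \<Longrightarrow> supp B (Atom ` At \<union> set xs) = supp_l B At xs"
proof -
  assume "finite At"
  then obtain ps where ps: "set ps = At" using finite_list by blast
  have "supp B (Atom ` At \<union> set xs) = supp_l B {} (map Atom ps @ xs)"
    using supp_eq[of "Atom ` At \<union> set xs" "map Atom ps @ xs" B] ps \<open>finite At\<close> by auto
  then show ?thesis using atoms_l ps by simp
qed

lemma supp_set: "supp B (set xs) = supp_l B {} xs"
  using supp_eq by simp

lemma supp_weak: "supp B \<Gamma> \<Longrightarrow> \<Gamma> \<subseteq> \<Gamma>2 \<Longrightarrow> finite \<Gamma>2 \<Longrightarrow> supp B \<Gamma>2"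
proof -
  assume a: "supp B \<Gamma>" "\<Gamma> \<subseteq> \<Gamma>2" "finite \<Gamma>2"
  then obtain xs ys where xs: "set xs = \<Gamma>" and ys: "set ys = \<Gamma>2 - \<Gamma>"
    by (meson finite_Diff finite_list finite_subset)
  have "supp_l B {} xs" using a xs supp_set by blast
  then have "supp_l B {} (ys @ xs)" by (induction ys) (auto intro: supp_l_weakF)
  moreover have "set (ys @ xs) = \<Gamma>2" using xs ys a by auto
  ultimately show ?thesis using supp_set by blast
qed

lemma supp_mono: "supp B \<Gamma> \<Longrightarrow> B \<subseteq> C \<Longrightarrow> supp C \<Gamma>"
proof -
  assume a: "supp B \<Gamma>" "B \<subseteq> C"
  obtain xs where xs: "set xs = \<Gamma>" using finite_list supp_fin[OF a(1)] by blast
  show ?thesis using a supp_l_mono[of B "{}" xs C] supp_set[of B xs] supp_set[of C xs] xs by simp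
qed

lemma supp_Bot: "finite S \<Longrightarrow> supp B (insert Bot S) = supp B S"
proof -
  assume "finite S"
  then obtain xs where xs: "set xs = S" using finite_list by blast
  show ?thesis using supp_set[of B "Bot # xs"] supp_set[of B xs] xs by simp
qed

lemma supp_Conj: "finite S \<Longrightarrow> supp B (insert (Conj X Y) S) = (supp B (insert X S) \<and> supp B (insert Y S))"
proof -
  assume "finite S"
  then obtain xs where xs: "set xs = S" using finite_list by blast
  show ?thesis using supp_set[of B "Conj X Y # xs"] supp_set[of B "X # xs"] supp_set[of B "Y # xs"] xs by simp
qed

lemma supp_Disj: "finite S \<Longrightarrow> supp B (insert (Disj X Y) S) = supp B (insert X (insert Y S))"
proof -
  assume "finite S"
  then obtain xs where xs: "set xs = S" using finite_list by blast
  show ?thesis using supp_set[of B "Disj X Y # xs"] supp_set[of B "X # Y # xs"] xs by simp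
qed

lemma supp_Imp: "finite S \<Longrightarrow> supp B (insert (Imp X Y) S) = (\<forall>C. wf_base C \<and> B \<subseteq> C \<longrightarrow>
      (\<forall>Th. finite Th \<longrightarrow> supp C (insert X (Atom ` Th)) \<longrightarrow> supp C (insert Y (Atom ` Th \<union> S))))"
proof -
  assume "finite S"
  then obtain xs where xs: "set xs = S" using finite_list by blast
  have e1: "\<And>C Th. finite Th \<Longrightarrow> supp C (insert X (Atom ` Th)) = supp_l C Th [X]"
    using supp_lset[of _ _ "[X]"] by simp
  have e2: "\<And>C Th. finite Th \<Longrightarrow> supp C (insert Y (Atom ` Th \<union> S)) = supp_l C Th (Y # xs)"
    using supp_lset[of _ _ "Y # xs"] xs by simp
  show ?thesis using supp_set[of B "Imp X Y # xs"] xs e1 e2 by simp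
qed

lemma cut_l: "supp_l C At (A # rs) \<Longrightarrow> wf_base C \<Longrightarrow> finite At \<Longrightarrow>
  (\<forall>C'. wf_base C' \<and> C \<subseteq> C' \<longrightarrow> (\<forall>T. finite T \<longrightarrow> supp_l C' T [A] \<longrightarrow> supp_l C' T es)) \<Longrightarrow>
  supp_l C At (rs @ es)"
proof (induction "msz rs" arbitrary: C At rs rule: less_induct)
  case less
  have IH: "\<And>C' At' rs'. msz rs' < msz rs \<Longrightarrow> supp_l C' At' (A # rs') \<Longrightarrow> wf_base C' \<Longrightarrow> finite At' \<Longrightarrow>
    (\<forall>C''. wf_base C'' \<and> C' \<subseteq> C'' \<longrightarrow> (\<forall>T. finite T \<longrightarrow> supp_l C'' T [A] \<longrightarrow> supp_l C'' T es)) \<Longrightarrow>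
    supp_l C' At' (rs' @ es)"
    using less.hyps by blast
  show ?case
  proof (cases rs)
    case Nil then show ?thesis using less.prems by auto
  next
    case (Cons F rs')
    have P0: "supp_l C At (F # A # rs')" using less.prems(1) Cons swap_l[of C At A F rs'] by simp
    show ?thesis
    proof (cases F)
      case (Atom p)
      have "supp_l C (insert p At) (A # rs')" using P0 Atom by simp
      then have "supp_l C (insert p At) (rs' @ es)"
        using IH[of rs' C "insert p At"] less.prems Cons Atom by auto
      then show ?thesis using Cons Atom by simp
    next
      case Bot
      have "supp_l C At (A # rs')" using P0 Bot by simp
      then have "supp_l C At (rs' @ es)"
        using IH[of rs' C At] less.prems Cons Bot by auto
      then show ?thesis using Cons Bot by simp
    next
      case (Conj X Y)
      have "supp_l C At (X # A # rs')" "supp_l C At (Y # A # rs')" using P0 Conj by simp_all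
      then have "supp_l C At (A # X # rs')" "supp_l C At (A # Y # rs')"
        using swap_l[of C At X A rs'] swap_l[of C At Y A rs'] by simp_all
      then have "supp_l C At ((X # rs') @ es)" "supp_l C At ((Y # rs') @ es)"
        using IH[of "X # rs'" C At] IH[of "Y # rs'" C At] less.prems Cons Conj by auto
      then show ?thesis using Cons Conj by simp
    next
      case (Disj X Y)
      have "supp_l C At (X # Y # A # rs')" using P0 Disj by simp
      moreover have "supp_l C At (X # Y # A # rs') = supp_l C At (A # X # Y # rs')" by (rule perm_l) simp
      ultimately have "supp_l C At (A # X # Y # rs')" by simp
      then have "supp_l C At ((X # Y # rs') @ es)"
        using IH[of "X # Y # rs'" C At] less.prems Cons Disj by auto
      then show ?thesis using Cons Disj by simp
    next
      case (Imp X Y)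
      have H: "supp_l C At (Imp X Y # A # rs')" using P0 Imp by simp
      show ?thesis unfolding Cons Imp append_Cons supp_l.simps(6)
      proof (intro allI impI)
        fix C' Th assume C': "wf_base C' \<and> C \<subseteq> C'" and T: "finite Th" and x: "supp_l C' Th [X]"
        have "supp_l C' (At \<union> Th) (Y # A # rs')" using H C' T x by simp
        then have "supp_l C' (At \<union> Th) (A # Y # rs')" using swap_l[of C' "At \<union> Th" Y A rs'] by simp
        moreover have "\<forall>C''. wf_base C'' \<and> C' \<subseteq> C'' \<longrightarrow> (\<forall>T. finite T \<longrightarrow> supp_l C'' T [A] \<longrightarrow> supp_l C'' T es)"
          using less.prems(4) C' by (meson order_trans)
        moreover have "msz (Y # rs') < msz rs" using Cons Imp by simp
        moreover have "wf_base C'" "finite (At \<union> Th)" using C' T less.prems(3) by auto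
        ultimately have "supp_l C' (At \<union> Th) ((Y # rs') @ es)"
          using IH[of "Y # rs'" C' "At \<union> Th"] by blast
        then show "supp_l C' (At \<union> Th) (Y # rs' @ es)" by simp
      qed
    qed
  qed
qed

lemma cut: "supp C (insert A R) \<Longrightarrow> wf_base C \<Longrightarrow> finite E \<Longrightarrow>
  (\<forall>C'. wf_base C' \<and> C \<subseteq> C' \<longrightarrow> (\<forall>T. finite T \<longrightarrow> supp C' (insert A (Atom ` T)) \<longrightarrow> supp C' (Atom ` T \<union> E))) \<Longrightarrow>
  supp C (R \<union> E)"
proof -
  assume a: "supp C (insert A R)" "wf_base C" "finite E"
    and H: "\<forall>C'. wf_base C' \<and> C \<subseteq> C' \<longrightarrow> (\<forall>T. finite T \<longrightarrow> supp C' (insert A (Atom ` T)) \<longrightarrow> supp C' (Atom ` T \<union> E))"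
  have "finite R" using supp_fin[OF a(1)] by simp
  then obtain rs where rs: "set rs = R" using finite_list by blast
  obtain es where es: "set es = E" using finite_list a(3) by blast
  have "supp_l C {} (A # rs)" using a(1) rs supp_set[of C "A # rs"] by simp
  moreover have "\<forall>C'. wf_base C' \<and> C \<subseteq> C' \<longrightarrow> (\<forall>T. finite T \<longrightarrow> supp_l C' T [A] \<longrightarrow> supp_l C' T es)"
  proof (intro allI impI)
    fix C' T assume c: "wf_base C' \<and> C \<subseteq> C'" and t: "finite T" and s: "supp_l C' T [A]"
    have "supp C' (insert A (Atom ` T))" using s supp_lset[OF t, of C' "[A]"] by simp
    then have "supp C' (Atom ` T \<union> E)" using H c t by blast
    then show "supp_l C' T es" using supp_lset[OF t, of C' es] es by simp
  qed
  moreover have "finite ({}::nat set)" by simp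
  ultimately have "supp_l C {} (rs @ es)" using cut_l[of C "{}" A rs es] a(2) by blast
  then show ?thesis using supp_set[of C "rs @ es"] rs es by simp
qed

definition Val :: "form set \<Rightarrow> form set \<Rightarrow> bool" where
  "Val \<Gamma> \<Delta> \<longleftrightarrow> (\<forall>C Th. wf_base C \<longrightarrow> (\<forall>A\<in>\<Gamma>. finite (Th A) \<and> supp C (insert A (Atom ` Th A))) \<longrightarrow>
      supp C (Atom ` (\<Union>A\<in>\<Gamma>. Th A) \<union> \<Delta>))"

lemma ctx:
  assumes V: "Val \<Gamma>1 \<Delta>1"
    and h: "\<forall>A\<in>\<Gamma>1. \<exists>T. finite T \<and> T \<subseteq> U \<and> supp C (insert A (Atom ` T))"
    and C: "wf_base C" and fD: "finite \<Delta>1" and fU: "finite U"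
  shows "supp C (Atom ` U \<union> \<Delta>1)"
proof -
  define Th where "Th A = (SOME T. finite T \<and> T \<subseteq> U \<and> supp C (insert A (Atom ` T)))" for A
  have th: "finite (Th A) \<and> Th A \<subseteq> U \<and> supp C (insert A (Atom ` Th A))" if "A \<in> \<Gamma>1" for A
    unfolding Th_def by (rule someI_ex) (use h that in blast)
  have "supp C (Atom ` (\<Union>A\<in>\<Gamma>1. Th A) \<union> \<Delta>1)" using V C th unfolding Val_def by blast
  moreover have "Atom ` (\<Union>A\<in>\<Gamma>1. Th A) \<union> \<Delta>1 \<subseteq> Atom ` U \<union> \<Delta>1" using th by blast
  moreover have "finite (Atom ` U \<union> \<Delta>1)" using fU fD by simp
  ultimately show ?thesis by (rule supp_weak)
qed

lemma CLp_fin: "CLp \<Gamma> \<Delta> \<Longrightarrow> finite \<Gamma> \<and> finite \<Delta>"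
  by (induction rule: CLp.induct) auto

lemma fin_Theta: "finite \<Gamma> \<Longrightarrow> \<forall>A\<in>\<Gamma>. finite (Th A) \<and> P A \<Longrightarrow> finite (\<Union>A\<in>\<Gamma>. Th A)"
  by auto

lemma sound: "CLp \<Gamma> \<Delta> \<Longrightarrow> Val \<Gamma> \<Delta>"
proof (induction rule: CLp.induct)
  case (init G D A)
  show ?case unfolding Val_def
  proof (intro allI impI)
    fix C Th assume C: "wf_base C" and H: "\<forall>X\<in>insert A G. finite (Th X) \<and> supp C (insert X (Atom ` Th X))"
    have fT: "finite (\<Union>X\<in>insert A G. Th X)" using init H by auto
    have "supp C (insert A (Atom ` Th A))" using H by blast
    then show "supp C (Atom ` (\<Union>X\<in>insert A G. Th X) \<union> insert A D)"
      by (rule supp_weak) (use fT init in auto)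
  qed
next
  case (LBot G D)
  show ?case unfolding Val_def
  proof (intro allI impI)
    fix C Th assume C: "wf_base C" and H: "\<forall>X\<in>insert Bot G. finite (Th X) \<and> supp C (insert X (Atom ` Th X))"
    have fT: "finite (\<Union>X\<in>insert Bot G. Th X)" using LBot H by auto
    have "supp C (Atom ` Th Bot)" using H supp_Bot[of "Atom ` Th Bot" C] by auto
    then show "supp C (Atom ` (\<Union>X\<in>insert Bot G. Th X) \<union> D)"
      by (rule supp_weak) (use fT LBot in auto)
  qed
next
  case (RBot G D)
  have fin: "finite G" "finite D" using CLp_fin[OF RBot(1)] by auto
  show ?case unfolding Val_def
  proof (intro allI impI)
    fix C Th assume C: "wf_base C" and H: "\<forall>X\<in>G. finite (Th X) \<and> supp C (insert X (Atom ` Th X))"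
    have fT: "finite (\<Union>X\<in>G. Th X)" using fin H by auto
    have "supp C (Atom ` (\<Union>X\<in>G. Th X) \<union> D)" using RBot(2) C H unfolding Val_def by blast
    then show "supp C (Atom ` (\<Union>X\<in>G. Th X) \<union> insert Bot D)"
      by (rule supp_weak) (use fT fin in auto)
  qed
next
  case (LConj A B G D)
  have fin: "finite G" "finite D" using CLp_fin[OF LConj(1)] by auto
  show ?case unfolding Val_def
  proof (intro allI impI)
    fix C Th assume C: "wf_base C" and H: "\<forall>X\<in>insert (Conj A B) G. finite (Th X) \<and> supp C (insert X (Atom ` Th X))"
    let ?U = "\<Union>X\<in>insert (Conj A B) G. Th X"
    have fT: "finite ?U" using fin H by auto
    have c: "supp C (insert A (Atom ` Th (Conj A B)))" "supp C (insert B (Atom ` Th (Conj A B)))"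
      using H supp_Conj[of "Atom ` Th (Conj A B)" C A B] by auto
    show "supp C (Atom ` ?U \<union> D)"
    proof (rule ctx[OF LConj(2) _ C fin(2) fT], intro ballI)
      fix X assume "X \<in> insert A (insert B G)"
      then show "\<exists>T. finite T \<and> T \<subseteq> ?U \<and> supp C (insert X (Atom ` T))"
      proof (elim insertE)
        assume "X = A" then show ?thesis using c H by (intro exI[of _ "Th (Conj A B)"]) auto
      next
        assume "X = B" then show ?thesis using c H by (intro exI[of _ "Th (Conj A B)"]) auto
      next
        assume "X \<in> G" then show ?thesis using H by (intro exI[of _ "Th X"]) auto
      qed
    qed
  qed
next
  case (RConj G A D G' B D')
  have fin: "finite G" "finite D" "finite G'" "finite D'" using CLp_fin[OF RConj(1)] CLp_fin[OF RConj(2)] by auto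
  show ?case unfolding Val_def
  proof (intro allI impI)
    fix C Th assume C: "wf_base C" and H: "\<forall>X\<in>G \<union> G'. finite (Th X) \<and> supp C (insert X (Atom ` Th X))"
    let ?U = "\<Union>X\<in>G \<union> G'. Th X"
    let ?S = "Atom ` ?U \<union> (D \<union> D')"
    have fT: "finite ?U" using fin H by auto
    have fS: "finite ?S" using fT fin by simp
    have "supp C (Atom ` (\<Union>X\<in>G. Th X) \<union> insert A D)" using RConj(3) C H unfolding Val_def by blast
    then have a: "supp C (insert A ?S)" by (rule supp_weak) (use fS in auto)
    have "supp C (Atom ` (\<Union>X\<in>G'. Th X) \<union> insert B D')" using RConj(4) C H unfolding Val_def by blast
    then have b: "supp C (insert B ?S)" by (rule supp_weak) (use fS in auto)
    have "supp C (insert (Conj A B) ?S)" using a b supp_Conj[OF fS] by blast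
    moreover have "insert (Conj A B) ?S = Atom ` ?U \<union> insert (Conj A B) (D \<union> D')" by auto
    ultimately show "supp C (Atom ` ?U \<union> insert (Conj A B) (D \<union> D'))" by simp
  qed
next
  case (LDisj A G D B G' D')
  have fin: "finite G" "finite D" "finite G'" "finite D'" using CLp_fin[OF LDisj(1)] CLp_fin[OF LDisj(2)] by auto
  show ?case unfolding Val_def
  proof (intro allI impI)
    fix C Th assume C: "wf_base C" and H: "\<forall>X\<in>insert (Disj A B) (G \<union> G'). finite (Th X) \<and> supp C (insert X (Atom ` Th X))"
    let ?U = "\<Union>X\<in>insert (Disj A B) (G \<union> G'). Th X"
    let ?T0 = "Th (Disj A B)"
    let ?UG = "\<Union>X\<in>G. Th X"
    let ?UG' = "\<Union>X\<in>G'. Th X"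
    have fT0: "finite ?T0" using H by auto
    have fUG: "finite ?UG" "finite ?UG'" using fin H by auto
    have d: "supp C (insert A (insert B (Atom ` ?T0)))" using H supp_Disj[of "Atom ` ?T0" C A B] by auto
    let ?E1 = "Atom ` ?UG \<union> D"
    have c1: "supp C (insert B (Atom ` ?T0) \<union> ?E1)"
    proof (rule cut[OF d C])
      show "finite ?E1" using fUG fin by simp
      show "\<forall>C'. wf_base C' \<and> C \<subseteq> C' \<longrightarrow> (\<forall>T. finite T \<longrightarrow> supp C' (insert A (Atom ` T)) \<longrightarrow> supp C' (Atom ` T \<union> ?E1))"
      proof (intro allI impI)
        fix C' T assume C': "wf_base C' \<and> C \<subseteq> C'" and T: "finite T" and s: "supp C' (insert A (Atom ` T))"
        have "supp C' (Atom ` (T \<union> ?UG) \<union> D)"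
        proof (rule ctx[OF LDisj(3)], intro ballI)
          show "wf_base C'" "finite D" "finite (T \<union> ?UG)" using C' fin T fUG by auto
          fix X assume "X \<in> insert A G"
          then show "\<exists>Ta. finite Ta \<and> Ta \<subseteq> T \<union> ?UG \<and> supp C' (insert X (Atom ` Ta))"
          proof (elim insertE)
            assume "X = A" then show ?thesis using s T by (intro exI[of _ T]) auto
          next
            assume "X \<in> G" then show ?thesis using H C' by (intro exI[of _ "Th X"]) (auto intro: supp_mono[of C _ C'])
          qed
        qed
        then show "supp C' (Atom ` T \<union> ?E1)" by (simp add: image_Un Un_assoc)
      qed
    qed
    let ?E2 = "Atom ` ?UG' \<union> D'"
    have c1': "supp C (insert B (Atom ` ?T0 \<union> ?E1))" using c1 by simp
    have c2: "supp C ((Atom ` ?T0 \<union> ?E1) \<union> ?E2)"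
    proof (rule cut[OF c1' C])
      show "finite ?E2" using fUG fin by simp
      show "\<forall>C'. wf_base C' \<and> C \<subseteq> C' \<longrightarrow> (\<forall>T. finite T \<longrightarrow> supp C' (insert B (Atom ` T)) \<longrightarrow> supp C' (Atom ` T \<union> ?E2))"
      proof (intro allI impI)
        fix C' T assume C': "wf_base C' \<and> C \<subseteq> C'" and T: "finite T" and s: "supp C' (insert B (Atom ` T))"
        have "supp C' (Atom ` (T \<union> ?UG') \<union> D')"
        proof (rule ctx[OF LDisj(4)], intro ballI)
          show "wf_base C'" "finite D'" "finite (T \<union> ?UG')" using C' fin T fUG by auto
          fix X assume "X \<in> insert B G'"
          then show "\<exists>Ta. finite Ta \<and> Ta \<subseteq> T \<union> ?UG' \<and> supp C' (insert X (Atom ` Ta))"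
          proof (elim insertE)
            assume "X = B" then show ?thesis using s T by (intro exI[of _ T]) auto
          next
            assume "X \<in> G'" then show ?thesis using H C' by (intro exI[of _ "Th X"]) (auto intro: supp_mono[of C _ C'])
          qed
        qed
        then show "supp C' (Atom ` T \<union> ?E2)" by (simp add: image_Un Un_assoc)
      qed
    qed
    moreover have "(Atom ` ?T0 \<union> ?E1) \<union> ?E2 = Atom ` ?U \<union> (D \<union> D')" by auto
    ultimately show "supp C (Atom ` ?U \<union> (D \<union> D'))" by simp
  qed
next
  case (RDisj G A B D)
  have fin: "finite G" "finite D" using CLp_fin[OF RDisj(1)] by auto
  show ?case unfolding Val_def
  proof (intro allI impI)
    fix C Th assume C: "wf_base C" and H: "\<forall>X\<in>G. finite (Th X) \<and> supp C (insert X (Atom ` Th X))"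
    let ?U = "\<Union>X\<in>G. Th X"
    let ?S = "Atom ` ?U \<union> D"
    have fS: "finite ?S" using fin H by auto
    have "supp C (Atom ` ?U \<union> insert A (insert B D))" using RDisj(2) C H unfolding Val_def by blast
    then have "supp C (insert A (insert B ?S))" by (rule supp_weak) (use fS in auto)
    then have "supp C (insert (Disj A B) ?S)" by (rule supp_Disj[OF fS, THEN iffD2])
    then show "supp C (Atom ` ?U \<union> insert (Disj A B) D)" by (rule supp_weak) (use fS in auto)
  qed
next
  case (LImp G A D B G' D')
  have fin: "finite G" "finite D" "finite G'" "finite D'" using CLp_fin[OF LImp(1)] CLp_fin[OF LImp(2)] by auto
  show ?case unfolding Val_def
  proof (intro allI impI)
    fix C Th assume C: "wf_base C" and H: "\<forall>X\<in>insert (Imp A B) (G \<union> G'). finite (Th X) \<and> supp C (insert X (Atom ` Th X))"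
    let ?U = "\<Union>X\<in>insert (Imp A B) (G \<union> G'). Th X"
    let ?T0 = "Th (Imp A B)"
    let ?UG = "\<Union>X\<in>G. Th X"
    let ?UG' = "\<Union>X\<in>G'. Th X"
    have fT0: "finite ?T0" using H by auto
    have fUG: "finite ?UG" "finite ?UG'" using fin H by auto
    have i: "\<forall>C'. wf_base C' \<and> C \<subseteq> C' \<longrightarrow> (\<forall>T. finite T \<longrightarrow> supp C' (insert A (Atom ` T)) \<longrightarrow>
        supp C' (insert B (Atom ` T \<union> Atom ` ?T0)))"
      using H supp_Imp[of "Atom ` ?T0" C A B] by auto
    have "supp C (Atom ` ?UG \<union> insert A D)" using LImp(3) C H unfolding Val_def by blast
    then have a: "supp C (insert A (Atom ` ?UG \<union> D))" by simp
    let ?E = "Atom ` ?T0 \<union> Atom ` ?UG' \<union> D'"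
    have "supp C ((Atom ` ?UG \<union> D) \<union> ?E)"
    proof (rule cut[OF a C])
      show "finite ?E" using fUG fin fT0 by simp
      show "\<forall>C'. wf_base C' \<and> C \<subseteq> C' \<longrightarrow> (\<forall>T. finite T \<longrightarrow> supp C' (insert A (Atom ` T)) \<longrightarrow> supp C' (Atom ` T \<union> ?E))"
      proof (intro allI impI)
        fix C' T assume C': "wf_base C' \<and> C \<subseteq> C'" and T: "finite T" and s: "supp C' (insert A (Atom ` T))"
        have sB: "supp C' (insert B (Atom ` (T \<union> ?T0)))" using i C' T s by (simp add: image_Un)
        have "supp C' (Atom ` (T \<union> ?T0 \<union> ?UG') \<union> D')"
        proof (rule ctx[OF LImp(4)], intro ballI)
          show "wf_base C'" "finite D'" "finite (T \<union> ?T0 \<union> ?UG')" using C' fin T fUG fT0 by auto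
          fix X assume "X \<in> insert B G'"
          then show "\<exists>Ta. finite Ta \<and> Ta \<subseteq> T \<union> ?T0 \<union> ?UG' \<and> supp C' (insert X (Atom ` Ta))"
          proof (elim insertE)
            assume "X = B" then show ?thesis using sB T fT0 by (intro exI[of _ "T \<union> ?T0"]) auto
          next
            assume "X \<in> G'" then show ?thesis using H C' by (intro exI[of _ "Th X"]) (auto intro: supp_mono[of C _ C'])
          qed
        qed
        then show "supp C' (Atom ` T \<union> ?E)" by (simp add: image_Un Un_assoc)
      qed
    qed
    moreover have "(Atom ` ?UG \<union> D) \<union> ?E = Atom ` ?U \<union> (D \<union> D')" by auto
    ultimately show "supp C (Atom ` ?U \<union> (D \<union> D'))" by simp
  qed
next
  case (RImp A G B D)
  have fin: "finite G" "finite D" using CLp_fin[OF RImp(1)] by auto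
  show ?case unfolding Val_def
  proof (intro allI impI)
    fix C Th assume C: "wf_base C" and H: "\<forall>X\<in>G. finite (Th X) \<and> supp C (insert X (Atom ` Th X))"
    let ?U = "\<Union>X\<in>G. Th X"
    let ?S = "Atom ` ?U \<union> D"
    have fU: "finite ?U" using fin H by auto
    have fS: "finite ?S" using fU fin by simp
    have "supp C (insert (Imp A B) ?S)" unfolding supp_Imp[OF fS]
    proof (intro allI impI)
      fix C' T assume C': "wf_base C' \<and> C \<subseteq> C'" and T: "finite T" and s: "supp C' (insert A (Atom ` T))"
      have "supp C' (Atom ` (T \<union> ?U) \<union> insert B D)"
      proof (rule ctx[OF RImp(2)], intro ballI)
        show "wf_base C'" "finite (insert B D)" "finite (T \<union> ?U)" using C' fin T fU by auto
        fix X assume "X \<in> insert A G"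
        then show "\<exists>Ta. finite Ta \<and> Ta \<subseteq> T \<union> ?U \<and> supp C' (insert X (Atom ` Ta))"
        proof (elim insertE)
          assume "X = A" then show ?thesis using s T by (intro exI[of _ T]) auto
        next
          assume "X \<in> G" then show ?thesis using H C' by (intro exI[of _ "Th X"]) (auto intro: supp_mono[of C _ C'])
        qed
      qed
      then show "supp C' (insert B (Atom ` T \<union> ?S))" by (rule supp_weak) (use fS T in auto)
    qed
    then show "supp C (Atom ` ?U \<union> insert (Imp A B) D)" by (rule supp_weak) (use fS in auto)
  qed
qed

theorem mainTheorem6:
  fixes \<Gamma> \<Delta> :: "form set"
  assumes "finite \<Gamma>" and "finite \<Delta>"
      and "CLp \<Gamma> \<Delta>"
  shows "cf_valid \<Gamma> \<Delta>"
proof -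
  have V: "Val \<Gamma> \<Delta>" using sound[OF assms(3)] .
  show ?thesis unfolding cf_valid_def supp_ctx_def
  proof (intro allI impI)
    fix B assume B: "wf_base B \<and> HS \<subseteq> B"
    show "if \<Gamma> = {} then supp B \<Delta>
          else \<forall>C. wf_base C \<and> B \<subseteq> C \<longrightarrow>
             (\<forall>Th :: form \<Rightarrow> nat set.
                (\<forall>A\<in>\<Gamma>. finite (Th A) \<and> supp C (insert A (Atom ` Th A))) \<longrightarrow>
                supp C (Atom ` (\<Union>A\<in>\<Gamma>. Th A) \<union> \<Delta>))"
    proof (cases "\<Gamma> = {}")
      case True
      have "supp B (Atom ` (\<Union>A\<in>\<Gamma>. (\<lambda>_. {}) A) \<union> \<Delta>)" using V B True unfolding Val_def by blast
      then show ?thesis using True by simp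
    next
      case False
      then show ?thesis using V unfolding Val_def by auto
    qed
  qed
qed

end
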